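(* Let $a,b,c,n$ be real constants with $a\neq 0$ and $n\neq 0$, and consider on the region of coordinates $(t,r,\phi,z)$ with $r>0$, $\phi$ periodic with period $2\pi$, the Lewis metric of the Weyl class $$ds^{2}=-f\,dt^{2}+2k\,dt\,d\phi+r^{(n^{2}-1)/2}(dr^{2}+dz^{2})+l\,d\phi^{2},$$ where $$f=ar^{1-n}-\frac{c^{2}r^{n+1}}{n^{2}a},\qquad C=\frac{cr^{n+1}}{naf}+b,\qquad k=-Cf,\qquad l=\frac{r^{2}}{f}-C^{2}f .$$ For a constant $\Omega$, introduce the coordinates $\bar{\phi}=\phi-\Omega t$, with $t,r,z$ unchanged. Then: (i) if $bc\neq n$ and $\Omega=c/(n-bc)$, the metric takes the form $$ds^{2}=-\bar{f}\,(dt+\bar{C}\,d\bar{\phi})^{2}+r^{(n^{2}-1)/2}(dr^{2}+dz^{2})+\frac{r^{2}}{\bar{f}}\,d\bar{\phi}^{2},$$ with $\bar{f}=r^{1-n}/\alpha$, $\bar{C}=b\,\frac{n-bc}{n}$ (a constant) and $\alpha=\frac{(n-bc)^{2}}{a n^{2}}$; in this case $\partial_t$ is timelike everywhere when $a>0$; (ii) if $b\neq 0$ and $\Omega=-1/b$, the metric takes the same form with $\bar{f}=r^{1+n}/\alpha$, $\alpha=-ab^{2}$, and $\bar{C}=-b\,\frac{n-bc}{n}$ (a constant); in this case $\partial_t$ is timelike everywhere when $a<0$. Moreover, in both cases, setting $\lambda_{\rm m}=(1-n)/4$ in case (i) and $\lambda_{\rm m}=(1+n)/4$ in case (ii), and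 $j=\tfrac14 b(n-bc)$ in both cases, the metric equals $$ds^{2}=-\frac{r^{4\lambda_{\rm m}}}{\alpha}\Big(dt-\frac{j}{\lambda_{\rm m}-1/4}\,d\bar{\phi}\Big)^{2}+r^{4\lambda_{\rm m}(2\lambda_{\rm m}-1)}(dr^{2}+dz^{2})+\alpha\, r^{2(1-2\lambda_{\rm m})}\,d\bar{\phi}^{2}.$$
   Context: Signature $(-+++)$. The metric is the general stationary cylindrically symmetric vacuum solution (Lewis metric) with all parameters real (Weyl class). The quantity $\lambda_{\rm m}$ is (as computed in the paper) the Komar integral of $\partial_t$ per unit $z$-length in the new coordinates and $j$ the Komar integral of $\partial_\phi$ per unit $z$-length; these interpretations are not needed for the claim. *)

theory Defs
  imports Complex_Main
begin

text \<open>Lewis metric (Weyl class), components as functions of r > 0.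
  The metric is evaluated as a quadratic form on a coordinate displacement
  (dt, dr, dphi, dz) at radius r; it does not depend on t, phi, z.\<close>

definition lewis_f :: "real \<Rightarrow> real \<Rightarrow> real \<Rightarrow> real \<Rightarrow> real" where
  "lewis_f a c n r = a * r powr (1 - n) - c^2 * r powr (n + 1) / (n^2 * a)"

definition lewis_C :: "real \<Rightarrow> real \<Rightarrow> real \<Rightarrow> real \<Rightarrow> real \<Rightarrow> real" where
  "lewis_C a b c n r = c * r powr (n + 1) / (n * a * lewis_f a c n r) + b"

definition lewis_k :: "real \<Rightarrow> real \<Rightarrow> real \<Rightarrow> real \<Rightarrow> real \<Rightarrow> real" where
  "lewis_k a b c n r = - lewis_C a b c n r * lewis_f a c n r"

definition lewis_l :: "real \<Rightarrow> real \<Rightarrow> real \<Rightarrow> real \<Rightarrow> real \<Rightarrow> real" where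
  "lewis_l a b c n r = r^2 / lewis_f a c n r - (lewis_C a b c n r)^2 * lewis_f a c n r"

definition lewis_metric ::
  "real \<Rightarrow> real \<Rightarrow> real \<Rightarrow> real \<Rightarrow> real \<Rightarrow> real \<Rightarrow> real \<Rightarrow> real \<Rightarrow> real \<Rightarrow> real" where
  "lewis_metric a b c n r dt dr dphi dz =
     - lewis_f a c n r * dt^2 + 2 * lewis_k a b c n r * dt * dphi
     + r powr ((n^2 - 1) / 2) * (dr^2 + dz^2) + lewis_l a b c n r * dphi^2"

definition bar_metric ::
  "real \<Rightarrow> real \<Rightarrow> real \<Rightarrow> real \<Rightarrow> real \<Rightarrow> real \<Rightarrow> real \<Rightarrow> real \<Rightarrow> real" where
  "bar_metric n fb Cb r dt dr dphib dz =
     - fb * (dt + Cb * dphib)^2 + r powr ((n^2 - 1) / 2) * (dr^2 + dz^2)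
     + r^2 / fb * dphib^2"

definition lam_metric ::
  "real \<Rightarrow> real \<Rightarrow> real \<Rightarrow> real \<Rightarrow> real \<Rightarrow> real \<Rightarrow> real \<Rightarrow> real \<Rightarrow> real" where
  "lam_metric lam j \<alpha> r dt dr dphib dz =
     - (r powr (4 * lam) / \<alpha>) * (dt - j / (lam - 1/4) * dphib)^2
     + r powr (4 * lam * (2 * lam - 1)) * (dr^2 + dz^2)
     + \<alpha> * r powr (2 * (1 - 2 * lam)) * dphib^2"

end

theory Submission
  imports Defs
begin

lemma c1p:
  fixes a b c n x y dt dp W A N :: real
  assumes "W*(n-b*c) = 1" "A*a = 1" "N*n = 1"
  shows "-(a*x - c^2*y*N^2*A)*dt^2 + 2*(-(c*y*N*A + b*(a*x - c^2*y*N^2*A)))*dt*(dp + c*W*dt)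
     + (y*A - 2*c*y*b*N*A - b^2*(a*x - c^2*y*N^2*A))*(dp + c*W*dt)^2
     = -(x*a*n^2*W^2)*(dt + b*(n-b*c)*N*dp)^2 + y*(n-b*c)^2*A*N^2*dp^2"
  using assms by algebra

lemma c2p:
  fixes a b c n x y dt dp W A N :: real
  assumes "W*b = 1" "A*a = 1" "N*n = 1"
  shows "-(a*x - c^2*y*N^2*A)*dt^2 + 2*(-(c*y*N*A + b*(a*x - c^2*y*N^2*A)))*dt*(dp + (-W)*dt)
     + (y*A - 2*c*y*b*N*A - b^2*(a*x - c^2*y*N^2*A))*(dp + (-W)*dt)^2
     = -(-y*A*W^2)*(dt + (-b*(n-b*c)*N)*dp)^2 + (-x*a*b^2)*dp^2"
  using assms by algebra

lemma xy: "r > 0 \<Longrightarrow> r powr (1-n) * r powr (1+n) = (r::real)^2"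
  by (simp add: powr_add[symmetric])

lemma expand:
  fixes a b c n r :: real
  assumes r: "r > 0" and a: "a \<noteq> 0" and n: "n \<noteq> 0" and f: "lewis_f a c n r \<noteq> 0"
  shows "lewis_metric a b c n r dt dr dp dz =
     -(a*r powr (1-n) - c^2*r powr (1+n)*(1/n)^2*(1/a))*dt^2
     + 2*(-(c*r powr (1+n)*(1/n)*(1/a) + b*(a*r powr (1-n) - c^2*r powr (1+n)*(1/n)^2*(1/a))))*dt*dp
     + (r powr (1+n)*(1/a) - 2*c*r powr (1+n)*b*(1/n)*(1/a) - b^2*(a*r powr (1-n) - c^2*r powr (1+n)*(1/n)^2*(1/a)))*dp^2
     + r powr ((n^2 - 1) / 2) * (dr^2 + dz^2)"
proof -
  define x where "x = r powr (1-n)"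
  define y where "y = r powr (1+n)"
  define F where "F = lewis_f a c n r"
  have F: "F = a*x - c^2*y*(1/n)^2*(1/a)"
    unfolding F_def lewis_f_def x_def y_def by (simp add: add.commute power_one_over)
  have r2: "r^2 = x*y" using xy[OF r] x_def y_def by simp
  have C: "lewis_C a b c n r = c*y*(1/n)*(1/a)/F + b"
    unfolding lewis_C_def F_def y_def by (simp add: add.commute)
  have Fn: "F \<noteq> 0" using f F_def by simp
  have K: "lewis_k a b c n r = -(c*y*(1/n)*(1/a) + b*F)"
    unfolding lewis_k_def C F_def[symmetric] using Fn by (simp add: field_simps)
  have key: "x*y - (c*y*(1/n)*(1/a))^2 = y*F/a" using a n unfolding F
    by (simp add: field_simps power2_eq_square)
  have L: "lewis_l a b c n r = y*(1/a) - 2*c*y*b*(1/n)*(1/a) - b^2*F"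
  proof -
    have "lewis_l a b c n r = (x*y - (c*y*(1/n)*(1/a))^2)/F - 2*(c*y*(1/n)*(1/a))*b - b^2*F"
    proof -
      have g: "\<And>u::real. x*y/F - (u/F+b)^2*F = (x*y - u^2)/F - 2*u*b - b^2*F"
        using Fn by (simp add: field_simps power2_eq_square)
      show ?thesis unfolding lewis_l_def C F_def[symmetric] r2 by (rule g)
    qed
    also have "\<dots> = y*(1/a) - 2*c*y*b*(1/n)*(1/a) - b^2*F"
      unfolding key using Fn by simp
    finally show ?thesis .
  qed
  show ?thesis unfolding lewis_metric_def K L F_def[symmetric]
    unfolding F x_def y_def by (simp add: algebra_simps)
qed

lemma c1q:
  fixes a b c n x y dt dp W A N R dr dz dphib :: real
  assumes "W*(n-b*c) = 1" "A*a = 1" "N*n = 1"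
  shows "-(a*x - c^2*y*N^2*A)*dt^2 + 2*(-(c*y*N*A + b*(a*x - c^2*y*N^2*A)))*dt*(dphib + c*W*dt)
     + (y*A - 2*c*y*b*N*A - b^2*(a*x - c^2*y*N^2*A))*(dphib + c*W*dt)^2 + R*(dr^2+dz^2)
     = -(x*a*n^2*W^2)*(dt + b*(n-b*c)*N*dphib)^2 + R*(dr^2+dz^2) + y*(n-b*c)^2*A*N^2*dphib^2"
  using assms by algebra

lemma c2q:
  fixes a b c n x y dt dp W A N R dr dz dphib :: real
  assumes "W*b = 1" "A*a = 1" "N*n = 1"
  shows "-(a*x - c^2*y*N^2*A)*dt^2 + 2*(-(c*y*N*A + b*(a*x - c^2*y*N^2*A)))*dt*(dphib + -W*dt)
     + (y*A - 2*c*y*b*N*A - b^2*(a*x - c^2*y*N^2*A))*(dphib + -W*dt)^2 + R*(dr^2+dz^2)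
     = -(-y*A*W^2)*(dt + -b*(n-b*c)*N*dphib)^2 + R*(dr^2+dz^2) + (-x*a*b^2)*dphib^2"
  using assms by algebra

theorem mainTheorem1:
  fixes a b c n \<Omega> :: real
  assumes "a \<noteq> 0" and "n \<noteq> 0"
  shows
   "(b * c \<noteq> n \<and> \<Omega> = c / (n - b * c) \<longrightarrow>
      (\<forall>r dt dr dphib dz. r > 0 \<and> lewis_f a c n r \<noteq> 0 \<longrightarrow>
         lewis_metric a b c n r dt dr (dphib + \<Omega> * dt) dz
         = bar_metric n (r powr (1 - n) / ((n - b*c)^2 / (a * n^2))) (b * (n - b*c) / n)
             r dt dr dphib dz)
    \<and> (\<forall>r dt dr dphib dz. r > 0 \<longrightarrow>
         bar_metric n (r powr (1 - n) / ((n - b*c)^2 / (a * n^2))) (b * (n - b*c) / n)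
             r dt dr dphib dz
         = lam_metric ((1 - n) / 4) (b * (n - b*c) / 4) ((n - b*c)^2 / (a * n^2))
             r dt dr dphib dz)
    \<and> (a > 0 \<longrightarrow> (\<forall>r. r > 0 \<and> lewis_f a c n r \<noteq> 0 \<longrightarrow>
         lewis_metric a b c n r 1 0 \<Omega> 0 < 0)))
  \<and> (b \<noteq> 0 \<and> \<Omega> = - 1 / b \<longrightarrow>
      (\<forall>r dt dr dphib dz. r > 0 \<and> lewis_f a c n r \<noteq> 0 \<longrightarrow>
         lewis_metric a b c n r dt dr (dphib + \<Omega> * dt) dz
         = bar_metric n (r powr (1 + n) / (- a * b^2)) (- b * (n - b*c) / n)
             r dt dr dphib dz)
    \<and> (\<forall>r dt dr dphib dz. r > 0 \<longrightarrow>
         bar_metric n (r powr (1 + n) / (- a * b^2)) (- b * (n - b*c) / n)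
             r dt dr dphib dz
         = lam_metric ((1 + n) / 4) (b * (n - b*c) / 4) (- a * b^2)
             r dt dr dphib dz)
    \<and> (a < 0 \<longrightarrow> (\<forall>r. r > 0 \<and> lewis_f a c n r \<noteq> 0 \<longrightarrow>
         lewis_metric a b c n r 1 0 \<Omega> 0 < 0)))"
proof -
  have pw: "\<And>r. r > 0 \<Longrightarrow> (0::real) < r powr p" for p by simp
  have gen1: "lewis_metric a b c n r dt dr (dphib + \<Omega> * dt) dz
         = bar_metric n (r powr (1 - n) / ((n - b*c)^2 / (a * n^2))) (b * (n - b*c) / n) r dt dr dphib dz"
    if h: "b * c \<noteq> n" "\<Omega> = c / (n - b * c)" "r > 0" "lewis_f a c n r \<noteq> 0" for r dt dr dphib dz
  proof -
    have m: "n - b*c \<noteq> 0" using h by simp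
    have W: "(1/(n-b*c))*(n-b*c) = 1" using m by simp
    have A: "(1/a)*a = 1" using assms by simp
    have N: "(1/n)*n = 1" using assms by simp
    have Om: "\<Omega> = c * (1/(n-b*c))" using h by simp
    have x0: "r powr (1-n) \<noteq> 0" using h by simp
    have e1: "r powr (1 - n) / ((n - b*c)^2 / (a * n^2)) = r powr (1-n)*a*n^2*(1/(n-b*c))^2"
      by (simp add: power_one_over)
    have e2: "r^2 / (r powr (1-n)*a*n^2*(1/(n-b*c))^2) = r powr (1+n)*(n-b*c)^2*(1/a)*(1/n)^2"
      using x0 m assms xy[OF h(3), of n, symmetric] by (simp add: field_simps power2_eq_square)
    have e3: "b * (n - b*c) / n = b*(n-b*c)*(1/n)" by simp
    have Om': "\<Omega> * dt = c * (1/(n-b*c)) * dt" using Om by simp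
    show ?thesis unfolding expand[OF h(3) assms h(4)] bar_metric_def e1 e2 e3 Om'
      by (rule c1q[OF W A N])
  qed
  have gen2: "lewis_metric a b c n r dt dr (dphib + \<Omega> * dt) dz
         = bar_metric n (r powr (1 + n) / (- a * b^2)) (- b * (n - b*c) / n) r dt dr dphib dz"
    if h: "b \<noteq> 0" "\<Omega> = - 1 / b" "r > 0" "lewis_f a c n r \<noteq> 0" for r dt dr dphib dz
  proof -
    have W: "(1/b)*b = 1" using h by simp
    have A: "(1/a)*a = 1" using assms by simp
    have N: "(1/n)*n = 1" using assms by simp
    have Om: "\<Omega> = - (1/b)" using h by simp
    have y0: "r powr (1+n) \<noteq> 0" using h by simp
    have e1: "r powr (1 + n) / (- a * b^2) = -(r powr (1+n))*(1/a)*(1/b)^2"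
      by (simp add: power_one_over)
    have e2: "r^2 / (-(r powr (1+n))*(1/a)*(1/b)^2) = -(r powr (1-n))*a*b^2"
      using y0 h assms xy[OF h(3), of n, symmetric] by (simp add: field_simps power2_eq_square)
    have e3: "- b * (n - b*c) / n = -b*(n-b*c)*(1/n)" by simp
    have Om': "\<Omega> * dt = - (1/b) * dt" using Om by simp
    show ?thesis unfolding expand[OF h(3) assms h(4)] bar_metric_def e1 e2 e3 Om'
      by (rule c2q[OF W A N])
  qed
  have lam1: "bar_metric n (r powr (1 - n) / ((n - b*c)^2 / (a * n^2))) (b * (n - b*c) / n) r dt dr dphib dz
         = lam_metric ((1 - n) / 4) (b * (n - b*c) / 4) ((n - b*c)^2 / (a * n^2)) r dt dr dphib dz"
    if h: "b * c \<noteq> n" "r > 0" for r dt dr dphib dz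
  proof -
    define \<alpha> where "\<alpha> = (n - b*c)^2 / (a * n^2)"
    have al: "\<alpha> \<noteq> 0" using h assms unfolding \<alpha>_def by simp
    have e0: "4 * ((1 - n) / 4) = 1 - n" by simp
    have e1: "4 * ((1 - n) / 4) * (2 * ((1 - n) / 4) - 1) = (n^2-1)/2"
      by (simp add: field_simps power2_eq_square)
    have e2: "r^2 / (r powr (1-n) / \<alpha>) = \<alpha> * r powr (2 * (1 - 2 * ((1 - n) / 4)))"
    proof -
      have "2 * (1 - 2 * ((1 - n) / 4)) = 1+n" by (simp add: field_simps)
      then have "r powr (2 * (1 - 2 * ((1 - n) / 4))) = r powr (1+n)" by (rule arg_cong)
      then show ?thesis using xy[OF h(2), of n, symmetric] al h by (simp add: field_simps)
    qed
    have e3: "b * (n - b*c) / 4 / ((1 - n) / 4 - 1/4) = - (b * (n - b*c) / n)"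
      using assms by (simp add: field_simps)
    show ?thesis unfolding bar_metric_def lam_metric_def \<alpha>_def[symmetric] e1 unfolding e0 e2 e3
      by (simp add: algebra_simps)
  qed
  have lam2: "bar_metric n (r powr (1 + n) / (- a * b^2)) (- b * (n - b*c) / n) r dt dr dphib dz
         = lam_metric ((1 + n) / 4) (b * (n - b*c) / 4) (- a * b^2) r dt dr dphib dz"
    if h: "b \<noteq> 0" "r > 0" for r dt dr dphib dz
  proof -
    define \<alpha> where "\<alpha> = - a * b^2"
    have al: "\<alpha> \<noteq> 0" using h assms unfolding \<alpha>_def by simp
    have e0: "4 * ((1 + n) / 4) = 1 + n" by simp
    have e1: "4 * ((1 + n) / 4) * (2 * ((1 + n) / 4) - 1) = (n^2-1)/2"
      by (simp add: field_simps power2_eq_square)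
    have e2: "r^2 / (r powr (1+n) / \<alpha>) = \<alpha> * r powr (2 * (1 - 2 * ((1 + n) / 4)))"
    proof -
      have "2 * (1 - 2 * ((1 + n) / 4)) = 1-n" by (simp add: field_simps)
      then have "r powr (2 * (1 - 2 * ((1 + n) / 4))) = r powr (1-n)" by (rule arg_cong)
      then show ?thesis using xy[OF h(2), of n, symmetric] al h by (simp add: field_simps)
    qed
    have e3: "b * (n - b*c) / 4 / ((1 + n) / 4 - 1/4) = - (- b * (n - b*c) / n)"
      using assms by (simp add: field_simps)
    show ?thesis unfolding bar_metric_def lam_metric_def \<alpha>_def[symmetric] e1 unfolding e0 e2 e3
      by (simp add: algebra_simps)
  qed
  have tl1: "lewis_metric a b c n r 1 0 \<Omega> 0 < 0"
    if h: "b * c \<noteq> n" "\<Omega> = c / (n - b * c)" "r > 0" "lewis_f a c n r \<noteq> 0" "a > 0" for r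
  proof -
    have "lewis_metric a b c n r 1 0 \<Omega> 0 = lewis_metric a b c n r 1 0 (0 + \<Omega> * 1) 0" by simp
    also have "\<dots> = - (r powr (1 - n) / ((n - b*c)^2 / (a * n^2)))"
      unfolding gen1[OF h(1-4)] bar_metric_def by simp
    also have "\<dots> < 0"
    proof -
      have "(n - b*c)^2 > 0" using h by simp
      moreover have "a * n^2 > 0" using h assms by simp
      moreover have "r powr (1-n) > 0" using h by simp
      ultimately show ?thesis by simp
    qed
    finally show ?thesis .
  qed
  have tl2: "lewis_metric a b c n r 1 0 \<Omega> 0 < 0"
    if h: "b \<noteq> 0" "\<Omega> = - 1 / b" "r > 0" "lewis_f a c n r \<noteq> 0" "a < 0" for r
  proof -
    have "lewis_metric a b c n r 1 0 \<Omega> 0 = lewis_metric a b c n r 1 0 (0 + \<Omega> * 1) 0" by simp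
    also have "\<dots> = - (r powr (1 + n) / (- a * b^2))"
      unfolding gen2[OF h(1-4)] bar_metric_def by simp
    also have "\<dots> < 0"
    proof -
      have "a * b^2 < 0" using h by (simp add: mult_neg_pos)
      moreover have "r powr (1+n) > 0" using h by simp
      ultimately show ?thesis by (simp add: divide_pos_neg)
    qed
    finally show ?thesis .
  qed
  show ?thesis
  proof (intro conjI impI allI)
    fix r dt dr dphib dz :: real
    assume "b * c \<noteq> n \<and> \<Omega> = c / (n - b * c)" "0 < r \<and> lewis_f a c n r \<noteq> 0"
    then show "lewis_metric a b c n r dt dr (dphib + \<Omega> * dt) dz
         = bar_metric n (r powr (1 - n) / ((n - b*c)^2 / (a * n^2))) (b * (n - b*c) / n) r dt dr dphib dz"
      using gen1 by simp
  next
    fix r dt dr dphib dz :: real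
    assume "b * c \<noteq> n \<and> \<Omega> = c / (n - b * c)" "0 < r"
    then show "bar_metric n (r powr (1 - n) / ((n - b*c)^2 / (a * n^2))) (b * (n - b*c) / n) r dt dr dphib dz
         = lam_metric ((1 - n) / 4) (b * (n - b*c) / 4) ((n - b*c)^2 / (a * n^2)) r dt dr dphib dz"
      using lam1 by simp
  next
    fix r :: real
    assume "b * c \<noteq> n \<and> \<Omega> = c / (n - b * c)" "0 < a" "0 < r \<and> lewis_f a c n r \<noteq> 0"
    then show "lewis_metric a b c n r 1 0 \<Omega> 0 < 0" using tl1 by simp
  next
    fix r dt dr dphib dz :: real
    assume "b \<noteq> 0 \<and> \<Omega> = - 1 / b" "0 < r \<and> lewis_f a c n r \<noteq> 0"
    then show "lewis_metric a b c n r dt dr (dphib + \<Omega> * dt) dz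
         = bar_metric n (r powr (1 + n) / (- a * b^2)) (- b * (n - b*c) / n) r dt dr dphib dz"
      using gen2 by simp
  next
    fix r dt dr dphib dz :: real
    assume "b \<noteq> 0 \<and> \<Omega> = - 1 / b" "0 < r"
    then show "bar_metric n (r powr (1 + n) / (- a * b^2)) (- b * (n - b*c) / n) r dt dr dphib dz
         = lam_metric ((1 + n) / 4) (b * (n - b*c) / 4) (- a * b^2) r dt dr dphib dz"
      using lam2 by simp
  next
    fix r :: real
    assume "b \<noteq> 0 \<and> \<Omega> = - 1 / b" "a < 0" "0 < r \<and> lewis_f a c n r \<noteq> 0"
    then show "lewis_metric a b c n r 1 0 \<Omega> 0 < 0" using tl2 by simp
  qed
qed

end
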